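(* Let $A$ be a metric space and let $a:\mathbb{R}^N\times A\to S^N$, $b:\mathbb{R}^N\times A\to\mathbb{R}^N$, $c:\mathbb{R}^N\times A\to\mathbb{R}$ be continuous. For $\alpha\in A$ set $L^\alpha u:=\mathrm{tr}(a(x,\alpha)D^2u)+b(x,\alpha)\cdot Du$ and $\tilde G[u]:=\sup_{\alpha\in A}\{-L^\alpha u+c(x,\alpha)u\}$. Assume: (i) $\tilde F(x,t,p,X)=\sup_{\alpha\in A}\{-\mathrm{tr}(a(x,\alpha)X)-b(x,\alpha)\cdot p+c(x,\alpha)t\}$ is continuous, $c\ge0$, and $\tilde G$ satisfies the Comparison Principle in every bounded open set $\Omega$ (a viscosity subsolution $u$ and supersolution $v$ of $\tilde G=0$ in $\Omega$ with $u\le v$ on $\partial\Omega$ satisfy $u\le v$ in $\Omega$); (ii) $\tilde G$ satisfies the Strong Minimum Principle: any viscosity supersolution of $\tilde G[v]=0$ in $\mathbb{R}^N$ that attains an interior nonpositive minimum is constant; (iii) there exist $R_o\ge0$ and an upper semicontinuous $W:\mathbb{R}^N\to\mathbb{R}$ with $\tilde G[W]\le0$ in the viscosity sense for $|x|>R_o$ and $\lim_{|x|\to\infty}W(x)=-\infty$. Let $v\in LSC(\mathbb{R}^N)$ be a viscosity supersolution of $\tilde G[v]\ge0$ in $\mathbb{R}^N$ such that $\limsup_{|x|\to\infty}\frac{v(x)}{W(x)}\le0$. If either $v\le0$ or $c\equiv0$, then $v$ is constant.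
   Context: $S^N$ denotes the space of real symmetric $N\times N$ matrices. Sub- and supersolutions are meant in the viscosity sense. *)

theory Defs
  imports "HOL-Analysis.Analysis" "HOL-Library.Liminf_Limsup"
begin

text \<open>Points of R^N are real^'n; S^N is the set of symmetric real^'n^'n matrices.\<close>

definition symmetric_mat :: "real^'n^'n \<Rightarrow> bool" where
  "symmetric_mat X \<longleftrightarrow> transpose X = X"

definition lsc_on :: "(real^'n) set \<Rightarrow> (real^'n \<Rightarrow> real) \<Rightarrow> bool" where
  "lsc_on S f \<longleftrightarrow> (\<forall>x\<in>S. \<forall>t<f x. eventually (\<lambda>y. t < f y) (at x within S))"

definition usc_on :: "(real^'n) set \<Rightarrow> (real^'n \<Rightarrow> real) \<Rightarrow> bool" where
  "usc_on S f \<longleftrightarrow> (\<forall>x\<in>S. \<forall>t>f x. eventually (\<lambda>y. f y < t) (at x within S))"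

definition C2_with :: "(real^'n \<Rightarrow> real) \<Rightarrow> (real^'n \<Rightarrow> real^'n) \<Rightarrow> (real^'n \<Rightarrow> real^'n^'n) \<Rightarrow> bool" where
  "C2_with \<phi> D\<phi> H\<phi> \<longleftrightarrow>
     (\<forall>y. (\<phi> has_derivative (\<lambda>h. D\<phi> y \<bullet> h)) (at y)) \<and>
     (\<forall>y. (D\<phi> has_derivative (\<lambda>h. H\<phi> y *v h)) (at y)) \<and>
     continuous_on UNIV H\<phi>"

definition visc_super ::
  "(real^'n \<Rightarrow> real \<Rightarrow> real^'n \<Rightarrow> real^'n^'n \<Rightarrow> real) \<Rightarrow> (real^'n) set \<Rightarrow> (real^'n \<Rightarrow> real) \<Rightarrow> bool" where
  "visc_super F Om v \<longleftrightarrow> lsc_on Om v \<and>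
     (\<forall>x0\<in>Om. \<forall>\<phi> D\<phi> H\<phi>. C2_with \<phi> D\<phi> H\<phi> \<longrightarrow>
        (\<exists>e>0. \<forall>y\<in>ball x0 e. v x0 - \<phi> x0 \<le> v y - \<phi> y) \<longrightarrow>
        F x0 (v x0) (D\<phi> x0) (H\<phi> x0) \<ge> 0)"

definition visc_sub ::
  "(real^'n \<Rightarrow> real \<Rightarrow> real^'n \<Rightarrow> real^'n^'n \<Rightarrow> real) \<Rightarrow> (real^'n) set \<Rightarrow> (real^'n \<Rightarrow> real) \<Rightarrow> bool" where
  "visc_sub F Om u \<longleftrightarrow> usc_on Om u \<and>
     (\<forall>x0\<in>Om. \<forall>\<phi> D\<phi> H\<phi>. C2_with \<phi> D\<phi> H\<phi> \<longrightarrow>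
        (\<exists>e>0. \<forall>y\<in>ball x0 e. u y - \<phi> y \<le> u x0 - \<phi> x0) \<longrightarrow>
        F x0 (u x0) (D\<phi> x0) (H\<phi> x0) \<le> 0)"

definition bellman ::
  "(real^'n \<Rightarrow> 'a \<Rightarrow> real^'n^'n) \<Rightarrow> (real^'n \<Rightarrow> 'a \<Rightarrow> real^'n) \<Rightarrow> (real^'n \<Rightarrow> 'a \<Rightarrow> real)
   \<Rightarrow> real^'n \<Rightarrow> real \<Rightarrow> real^'n \<Rightarrow> real^'n^'n \<Rightarrow> real" where
  "bellman a b c x t p X = (SUP \<alpha>. - trace (a x \<alpha> ** X) - b x \<alpha> \<bullet> p + c x \<alpha> * t)"

end

theory Submission
  imports Defs
begin

lemma trace_transpose': "trace (transpose (M::real^'n^'n)) = trace M"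
  by (simp add: trace_def transpose_def)

lemma trace_scaleR': "trace (r *\<^sub>R (M::real^'n^'n)) = r * trace M"
  by (simp add: trace_def sum_distrib_left)

lemma mat_mult_scaleR_right': "(A::real^'n^'n) ** (r *\<^sub>R X) = r *\<^sub>R (A ** X)"
  by (simp add: matrix_matrix_mult_def vec_eq_iff sum_distrib_left algebra_simps)

lemma trace_sym:
  assumes "symmetric_mat (A::real^'n^'n)"
  shows "trace (A ** X) = trace (A ** ((1/2) *\<^sub>R (X + transpose X)))"
proof -
  have "trace (A ** transpose X) = trace (transpose X ** A)" by (rule trace_mul_sym)
  also have "transpose X ** A = transpose (A ** X)"
    using assms by (simp add: matrix_transpose_mul symmetric_mat_def)
  also have "trace \<dots> = trace (A ** X)" by (rule trace_transpose')
  finally have "trace (A ** transpose X) = trace (A ** X)" .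
  then show ?thesis
    by (simp add: mat_mult_scaleR_right' trace_scaleR' matrix_add_ldistrib trace_add)
qed

lemma sym_sym: "symmetric_mat ((1/2) *\<^sub>R (X + transpose (X::real^'n^'n)))"
  by (simp add: symmetric_mat_def transpose_def vec_eq_iff)

lemma lsc_mono: "lsc_on UNIV f \<Longrightarrow> lsc_on S f"
  unfolding lsc_on_def
  by (meson UNIV_I at_le filter_leD subset_UNIV)

lemma usc_mono: "usc_on UNIV f \<Longrightarrow> usc_on S f"
  unfolding usc_on_def
  by (meson UNIV_I at_le filter_leD subset_UNIV)

lemma usc_affine:
  assumes "usc_on UNIV f" "(e::real) > 0"
  shows "usc_on UNIV (\<lambda>y. k + e * f y)"
  unfolding usc_on_def
proof (intro ballI allI impI)
  fix x t assume "t > k + e * f x"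
  then have "(t - k) / e > f x" using assms(2) by (simp add: field_simps)
  then have "eventually (\<lambda>y. f y < (t - k) / e) (at x within UNIV)"
    using assms(1) unfolding usc_on_def by blast
  then show "eventually (\<lambda>y. k + e * f y < t) (at x within UNIV)"
    by eventually_elim (use assms(2) in \<open>simp add: field_simps\<close>)
qed

lemma lsc_shift:
  assumes "lsc_on UNIV f"
  shows "lsc_on UNIV (\<lambda>y. f y - k)"
  unfolding lsc_on_def
proof (intro ballI allI impI)
  fix x t assume "t < f x - k"
  then have "t + k < f x" by simp
  then have "eventually (\<lambda>y. t + k < f y) (at x within UNIV)"
    using assms(1) unfolding lsc_on_def by blast
  then show "eventually (\<lambda>y. t < f y - k) (at x within UNIV)"
    by eventually_elim simp
qed

lemma lsc_closed:
  assumes "lsc_on UNIV f"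
  shows "closed {x. f x \<le> t}"
proof -
  have "\<forall>x\<in>{z. t < f z}. \<exists>T. open T \<and> x \<in> T \<and> T \<subseteq> {z. t < f z}"
  proof
    fix x assume "x \<in> {z. t < f z}"
    then have tx: "t < f x" by simp
    have "\<forall>x\<in>UNIV. \<forall>t<f x. eventually (\<lambda>y. t < f y) (at x within UNIV)"
      using assms unfolding lsc_on_def .
    then have "eventually (\<lambda>y. t < f y) (at x)"
      using tx by simp
    then obtain S where S: "open S" "x \<in> S" "\<forall>y\<in>S. y \<noteq> x \<longrightarrow> t < f y"
      unfolding eventually_at_topological by blast
    have "S \<subseteq> {z. t < f z}"
    proof
      fix y assume "y \<in> S" then show "y \<in> {z. t < f z}"
        using S(3) tx by (cases "y = x") auto
    qed
    then show "\<exists>T. open T \<and> x \<in> T \<and> T \<subseteq> {z. t < f z}"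
      using S by blast
  qed
  then have "open {z. t < f z}" using open_subopen by blast
  moreover have "{x. f x \<le> t} = - {z. t < f z}" by auto
  ultimately show ?thesis by (simp add: closed_def)
qed

lemma lsc_attains_min:
  fixes f :: "real^'n \<Rightarrow> real"
  assumes "lsc_on UNIV f" "compact K" "K \<noteq> {}"
  shows "\<exists>x\<in>K. \<forall>y\<in>K. f x \<le> f y"
proof -
  have "K \<inter> (\<Inter>i\<in>K. {x. f x \<le> f i}) \<noteq> {}"
  proof (rule compact_imp_fip_image[OF assms(2)])
    fix i show "closed {x. f x \<le> f i}" by (rule lsc_closed[OF assms(1)])
  next
    fix I' assume I': "finite I'" "I' \<subseteq> K"
    show "K \<inter> (\<Inter>i\<in>I'. {x. f x \<le> f i}) \<noteq> {}"
    proof (cases "I' = {}")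
      case True then show ?thesis using assms(3) by simp
    next
      case False
      have "Min (f ` I') \<in> f ` I'" using I'(1) False by (intro Min_in) auto
      then obtain j where j: "j \<in> I'" "f j = Min (f ` I')" by auto
      then have j2: "\<forall>i\<in>I'. f j \<le> f i" using I'(1) by simp
      then have "j \<in> K \<inter> (\<Inter>i\<in>I'. {x. f x \<le> f i})" using I' j j2 by auto
      then show ?thesis by blast
    qed
  qed
  then show ?thesis by blast
qed


lemma super_restrict: "visc_super F UNIV v \<Longrightarrow> visc_super F S v"
  unfolding visc_super_def using lsc_mono by blast

lemma sub_restrict: "visc_sub F T u \<Longrightarrow> S \<subseteq> T \<Longrightarrow> usc_on S u \<Longrightarrow> visc_sub F S u"
  unfolding visc_sub_def by blast

lemma C2_shift: "C2_with \<phi> D\<phi> H\<phi> \<Longrightarrow> C2_with (\<lambda>y. \<phi> y + k) D\<phi> H\<phi>"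
  unfolding C2_with_def
  by (auto intro!: derivative_eq_intros)

lemma C2_affine:
  assumes "C2_with \<phi> D\<phi> H\<phi>" "(e::real) > 0"
  shows "C2_with (\<lambda>y. (\<phi> y - k) / e) (\<lambda>y. (1/e) *\<^sub>R D\<phi> y) (\<lambda>y. (1/e) *\<^sub>R H\<phi> y)"
  unfolding C2_with_def
proof (intro conjI allI)
  fix y
  have "(\<phi> has_derivative (\<lambda>h. D\<phi> y \<bullet> h)) (at y)" using assms unfolding C2_with_def by blast
  then have "((\<lambda>y. (1/e) * (\<phi> y - k)) has_derivative (\<lambda>h. (1/e) * (D\<phi> y \<bullet> h - 0))) (at y)"
    by (intro has_derivative_mult_right has_derivative_diff has_derivative_const)
  then show "((\<lambda>y. (\<phi> y - k) / e) has_derivative (\<lambda>h. (1/e) *\<^sub>R D\<phi> y \<bullet> h)) (at y)"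
    by (simp add: divide_inverse mult.commute)
next
  fix y
  have "(D\<phi> has_derivative (\<lambda>h. H\<phi> y *v h)) (at y)" using assms unfolding C2_with_def by blast
  then have "((\<lambda>y. (1/e) *\<^sub>R D\<phi> y) has_derivative (\<lambda>h. (1/e) *\<^sub>R (H\<phi> y *v h))) (at y)"
    by (intro derivative_intros)
  then show "((\<lambda>y. (1/e) *\<^sub>R D\<phi> y) has_derivative (\<lambda>h. ((1/e) *\<^sub>R H\<phi> y) *v h)) (at y)"
    by (simp add: scaleR_matrix_vector_assoc)
next
  show "continuous_on UNIV (\<lambda>y. (1/e) *\<^sub>R H\<phi> y)"
    using assms unfolding C2_with_def by (intro continuous_intros) auto
qed

lemma trace_inv_scale: "trace ((A::real^'n^'n) ** ((1/e) *\<^sub>R H)) = trace (A ** H) / e"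
  by (simp add: mat_mult_scaleR_right' trace_scaleR')
lemma inner_inv_scale: "(b::real^'n) \<bullet> ((1/e) *\<^sub>R D) = (b \<bullet> D) / e"
  by simp

lemma aff_eq: "(e::real) > 0 \<Longrightarrow> - T - B + c * (k + e * W) = e * (- (T/e) - B/e + c * W) + c * k"
  by (simp add: field_simps)

lemma bellman_bdd:
  assumes a_sym: "\<And>x \<alpha>. symmetric_mat (a x \<alpha>)"
    and F_finite: "\<And>x t p X. symmetric_mat X \<Longrightarrow>
        bdd_above (range (\<lambda>\<alpha>. - trace (a x \<alpha> ** X) - b x \<alpha> \<bullet> p + c x \<alpha> * t))"
  shows "bdd_above (range (\<lambda>\<alpha>. - trace (a x \<alpha> ** X) - b x \<alpha> \<bullet> p + c x \<alpha> * t))"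
proof -
  have eq: "(\<lambda>\<alpha>. - trace (a x \<alpha> ** X) - b x \<alpha> \<bullet> p + c x \<alpha> * t) =
        (\<lambda>\<alpha>. - trace (a x \<alpha> ** ((1/2) *\<^sub>R (X + transpose X))) - b x \<alpha> \<bullet> p + c x \<alpha> * t)"
    using trace_sym[OF a_sym] by simp
  show ?thesis unfolding eq by (rule F_finite[OF sym_sym])
qed

lemma sub_affine:
  fixes a :: "real^'n \<Rightarrow> 'a \<Rightarrow> real^'n^'n"
  assumes a_sym: "\<And>x \<alpha>. symmetric_mat (a x \<alpha>)"
    and F_finite: "\<And>x t p X. symmetric_mat X \<Longrightarrow>
        bdd_above (range (\<lambda>\<alpha>. - trace (a x \<alpha> ** X) - b x \<alpha> \<bullet> p + c x \<alpha> * t))"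
    and W_sub: "visc_sub (bellman a b c) S W"
    and e: "(e::real) > 0"
    and ck: "\<And>x \<alpha>. c x \<alpha> * k \<le> 0"
    and u_usc: "usc_on S (\<lambda>y. k + e * W y)"
  shows "visc_sub (bellman a b c) S (\<lambda>y. k + e * W y)"
  unfolding visc_sub_def
proof (intro conjI u_usc ballI allI impI)
  fix x0 \<phi> D\<phi> H\<phi>
  assume x0: "x0 \<in> S" and C2: "C2_with \<phi> D\<phi> H\<phi>"
    and touch: "\<exists>r>0. \<forall>y\<in>ball x0 r. k + e * W y - \<phi> y \<le> k + e * W x0 - \<phi> x0"
  define \<psi> where "\<psi> = (\<lambda>y. (\<phi> y - k) / e)"
  define D\<psi> where "D\<psi> = (\<lambda>y. (1/e) *\<^sub>R D\<phi> y)"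
  define H\<psi> where "H\<psi> = (\<lambda>y. (1/e) *\<^sub>R H\<phi> y)"
  have C2': "C2_with \<psi> D\<psi> H\<psi>" unfolding \<psi>_def D\<psi>_def H\<psi>_def by (rule C2_affine[OF C2 e])
  have touch': "\<exists>r>0. \<forall>y\<in>ball x0 r. W y - \<psi> y \<le> W x0 - \<psi> x0"
  proof -
    obtain r where r: "r > 0" "\<forall>y\<in>ball x0 r. k + e * W y - \<phi> y \<le> k + e * W x0 - \<phi> x0"
      using touch by blast
    have "\<forall>y\<in>ball x0 r. W y - \<psi> y \<le> W x0 - \<psi> x0"
    proof
      fix y assume "y \<in> ball x0 r"
      then have "k + e * W y - \<phi> y \<le> k + e * W x0 - \<phi> x0" using r by blast
      then have "(e * W y - (\<phi> y - k)) / e \<le> (e * W x0 - (\<phi> x0 - k)) / e"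
        using e by (intro divide_right_mono) auto
      then show "W y - \<psi> y \<le> W x0 - \<psi> x0"
        using e unfolding \<psi>_def by (simp add: diff_divide_distrib)
    qed
    then show ?thesis using r by blast
  qed
  have le0: "bellman a b c x0 (W x0) (D\<psi> x0) (H\<psi> x0) \<le> 0"
    using W_sub x0 C2' touch' unfolding visc_sub_def by blast
  show "bellman a b c x0 (k + e * W x0) (D\<phi> x0) (H\<phi> x0) \<le> 0"
    unfolding bellman_def
  proof (rule cSUP_least)
    show "UNIV \<noteq> {}" by simp
  next
    fix \<alpha>
    have bdd: "bdd_above (range (\<lambda>\<alpha>. - trace (a x0 \<alpha> ** H\<psi> x0) - b x0 \<alpha> \<bullet> D\<psi> x0 + c x0 \<alpha> * W x0))"
      by (rule bellman_bdd[OF a_sym F_finite])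
    have "- trace (a x0 \<alpha> ** H\<psi> x0) - b x0 \<alpha> \<bullet> D\<psi> x0 + c x0 \<alpha> * W x0
       \<le> (SUP \<alpha>. - trace (a x0 \<alpha> ** H\<psi> x0) - b x0 \<alpha> \<bullet> D\<psi> x0 + c x0 \<alpha> * W x0)"
      by (rule cSUP_upper[OF UNIV_I bdd])
    then have g: "- trace (a x0 \<alpha> ** H\<psi> x0) - b x0 \<alpha> \<bullet> D\<psi> x0 + c x0 \<alpha> * W x0 \<le> 0"
      using le0 unfolding bellman_def by linarith
    have eq: "- trace (a x0 \<alpha> ** H\<phi> x0) - b x0 \<alpha> \<bullet> D\<phi> x0 + c x0 \<alpha> * (k + e * W x0)
      = e * (- trace (a x0 \<alpha> ** H\<psi> x0) - b x0 \<alpha> \<bullet> D\<psi> x0 + c x0 \<alpha> * W x0) + c x0 \<alpha> * k"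
    proof -
      have t: "trace (a x0 \<alpha> ** H\<psi> x0) = trace (a x0 \<alpha> ** H\<phi> x0) / e"
        unfolding H\<psi>_def by (rule trace_inv_scale)
      have bb: "b x0 \<alpha> \<bullet> D\<psi> x0 = (b x0 \<alpha> \<bullet> D\<phi> x0) / e"
        unfolding D\<psi>_def by (rule inner_inv_scale)
      show ?thesis unfolding t bb by (rule aff_eq[OF e])
    qed
    have "e * (- trace (a x0 \<alpha> ** H\<psi> x0) - b x0 \<alpha> \<bullet> D\<psi> x0 + c x0 \<alpha> * W x0) \<le> 0"
      using e by (intro mult_nonneg_nonpos[OF _ g]) simp
    then show "- trace (a x0 \<alpha> ** H\<phi> x0) - b x0 \<alpha> \<bullet> D\<phi> x0 + c x0 \<alpha> * (k + e * W x0) \<le> 0"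
      using eq ck[of x0 \<alpha>] by linarith
  qed
qed

lemma super_shift:
  assumes v_super: "visc_super (bellman a b c) UNIV v"
    and c0: "\<And>x \<alpha>. c x \<alpha> = 0"
  shows "visc_super (bellman a b c) UNIV (\<lambda>y. v y - k)"
  unfolding visc_super_def
proof (intro conjI ballI allI impI)
  show "lsc_on UNIV (\<lambda>y. v y - k)" using v_super lsc_shift unfolding visc_super_def by blast
next
  fix x0 \<phi> D\<phi> H\<phi>
  assume C2: "C2_with \<phi> D\<phi> H\<phi>"
    and touch: "\<exists>r>0. \<forall>y\<in>ball x0 r. v x0 - k - \<phi> x0 \<le> v y - k - \<phi> y"
  have touch': "\<exists>r>0. \<forall>y\<in>ball x0 r. v x0 - (\<phi> x0 + k) \<le> v y - (\<phi> y + k)"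
    using touch by (simp add: algebra_simps)
  have "bellman a b c x0 (v x0) (D\<phi> x0) (H\<phi> x0) \<ge> 0"
    using v_super C2_shift[OF C2] touch' unfolding visc_super_def by blast
  then show "bellman a b c x0 (v x0 - k) (D\<phi> x0) (H\<phi> x0) \<ge> 0"
    unfolding bellman_def by (simp add: c0)
qed

theorem theorem2p3:
  fixes a :: "real^'n \<Rightarrow> 'a::metric_space \<Rightarrow> real^'n^'n"
    and b :: "real^'n \<Rightarrow> 'a \<Rightarrow> real^'n"
    and c :: "real^'n \<Rightarrow> 'a \<Rightarrow> real"
    and W v :: "real^'n \<Rightarrow> real"
    and R\<^sub>o :: real
  assumes a_sym: "\<And>x \<alpha>. symmetric_mat (a x \<alpha>)"
    and a_cont: "continuous_on UNIV (\<lambda>(x, \<alpha>). a x \<alpha>)"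
    and b_cont: "continuous_on UNIV (\<lambda>(x, \<alpha>). b x \<alpha>)"
    and c_cont: "continuous_on UNIV (\<lambda>(x, \<alpha>). c x \<alpha>)"
    \<comment> \<open>(i)\<close>
    and F_finite: "\<And>x t p X. symmetric_mat X \<Longrightarrow>
        bdd_above (range (\<lambda>\<alpha>. - trace (a x \<alpha> ** X) - b x \<alpha> \<bullet> p + c x \<alpha> * t))"
    and F_cont: "continuous_on {(x, t, p, X). symmetric_mat X}
        (\<lambda>(x, t, p, X). bellman a b c x t p X)"
    and c_nonneg: "\<And>x \<alpha>. c x \<alpha> \<ge> 0"
    and comparison: "\<And>\<Omega> u w. open \<Omega> \<Longrightarrow> bounded \<Omega> \<Longrightarrow>
        usc_on (closure \<Omega>) u \<Longrightarrow> lsc_on (closure \<Omega>) w \<Longrightarrow>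
        visc_sub (bellman a b c) \<Omega> u \<Longrightarrow> visc_super (bellman a b c) \<Omega> w \<Longrightarrow>
        (\<forall>x\<in>frontier \<Omega>. u x \<le> w x) \<Longrightarrow> \<forall>x\<in>\<Omega>. u x \<le> w x"
    \<comment> \<open>(ii)\<close>
    and strong_min: "\<And>w x0. visc_super (bellman a b c) UNIV w \<Longrightarrow>
        (\<forall>y. w x0 \<le> w y) \<Longrightarrow> w x0 \<le> 0 \<Longrightarrow> (\<forall>y. w y = w x0)"
    \<comment> \<open>(iii)\<close>
    and R_nonneg: "R\<^sub>o \<ge> 0"
    and W_usc: "usc_on UNIV W"
    and W_sub: "visc_sub (bellman a b c) {x. norm x > R\<^sub>o} W"
    and W_lim: "filterlim W at_bot at_infinity"
    \<comment> \<open>the function v\<close>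
    and v_super: "visc_super (bellman a b c) UNIV v"
    and v_growth: "Limsup at_infinity (\<lambda>x. ereal (v x / W x)) \<le> 0"
    and alt: "(\<forall>x. v x \<le> 0) \<or> (\<forall>x \<alpha>. c x \<alpha> = 0)"
  shows "\<exists>k. \<forall>x. v x = k"
proof -
  have v_lsc: "lsc_on UNIV v" using v_super unfolding visc_super_def by blast
  have "eventually (\<lambda>y. W y \<le> -1) at_infinity" using W_lim by (simp add: filterlim_at_bot)
  then obtain b1 where b1: "\<And>y. b1 \<le> norm y \<Longrightarrow> W y \<le> -1"
    unfolding eventually_at_infinity by blast
  define R1 where "R1 = max b1 (R\<^sub>o + 1)"
  have R1: "R1 \<ge> b1" "R1 \<ge> R\<^sub>o + 1" unfolding R1_def by auto
  have WR1: "\<And>y. R1 \<le> norm y \<Longrightarrow> W y \<le> -1" using b1 R1 by force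
  define K where "K = cball (0::real^'n) R1"
  have cK: "compact K" unfolding K_def by simp
  have "R1 \<ge> 0" using R1 R_nonneg by linarith
  then have "0 \<in> K" unfolding K_def by simp
  then have neK: "K \<noteq> {}" by blast
  obtain x0 where x0a: "x0 \<in> K" and x0b: "\<forall>y\<in>K. v x0 \<le> v y"
    using lsc_attains_min[OF v_lsc cK neK] by blast
  have x0: "x0 \<in> K" "\<And>y. y \<in> K \<Longrightarrow> v x0 \<le> v y" using x0a x0b by auto
  define m where "m = v x0"
  have mK: "\<And>y. norm y \<le> R1 \<Longrightarrow> m \<le> v y"
    using x0 unfolding m_def K_def by (simp add: dist_norm)
  have glob: "m \<le> v x" for x
  proof (rule ccontr)
    assume "\<not> m \<le> v x"
    then have vx: "v x < m" by simp
    have nx: "norm x > R1" using mK[of x] vx by linarith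
    define \<eta> where "\<eta> = (m - v x) / 2"
    have eta: "\<eta> > 0" unfolding \<eta>_def using vx by simp
    define k where "k = m - \<eta>"
    define \<epsilon> where "\<epsilon> = \<eta> / (2 * (\<bar>W x\<bar> + 1))"
    have eps: "\<epsilon> > 0" unfolding \<epsilon>_def using eta by (simp add: add_pos_nonneg)
    have epsW: "\<epsilon> * (\<bar>W x\<bar> + 1) = \<eta> / 2" unfolding \<epsilon>_def by (simp add: field_simps add_pos_nonneg)
    have ck: "\<And>y \<alpha>. c y \<alpha> * k \<le> 0"
    proof -
      fix y \<alpha>
      show "c y \<alpha> * k \<le> 0"
      proof (cases "\<forall>x. v x \<le> 0")
        case True
        then have "k < 0" unfolding k_def m_def using eta by (metis diff_less_0_iff_less order_le_less_trans)
        then show ?thesis using c_nonneg[of y \<alpha>] by (simp add: mult_nonneg_nonpos)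
      next
        case False
        then have "\<forall>x \<alpha>. c x \<alpha> = 0" using alt by blast
        then show ?thesis by simp
      qed
    qed
    have ev1: "eventually (\<lambda>y. ereal (v y / W y) < ereal (\<epsilon>/2)) at_infinity"
      proof (rule Limsup_lessD)
      have "ereal 0 < ereal (\<epsilon>/2)" using eps by simp
      then show "Limsup at_infinity (\<lambda>x. ereal (v x / W x)) < ereal (\<epsilon>/2)"
        using v_growth zero_ereal_def by (metis order_le_less_trans)
    qed
    have ev2: "eventually (\<lambda>y. W y \<le> -2*k/\<epsilon>) at_infinity"
      using W_lim by (simp add: filterlim_at_bot)
    have "eventually (\<lambda>y. ereal (v y / W y) < ereal (\<epsilon>/2) \<and> W y \<le> -2*k/\<epsilon>) at_infinity"
      using ev1 ev2 by (rule eventually_conj)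
    then obtain b2 where b2: "\<And>y. b2 \<le> norm y \<Longrightarrow> ereal (v y / W y) < ereal (\<epsilon>/2) \<and> W y \<le> -2*k/\<epsilon>"
      unfolding eventually_at_infinity by blast
    define R where "R = max b2 (max (norm x + 1) (R1 + 1))"
    have R: "R \<ge> b2" "R > norm x" "R > R1" unfolding R_def by auto
    define \<Omega> where "\<Omega> = ball (0::real^'n) R - cball 0 R1"
    have memO: "\<And>y. y \<in> \<Omega> \<longleftrightarrow> norm y < R \<and> R1 < norm y"
      unfolding \<Omega>_def by (auto simp: dist_norm)
    have oO: "open \<Omega>" unfolding \<Omega>_def by (intro open_Diff) auto
    have bO: "bounded \<Omega>" unfolding \<Omega>_def by (rule bounded_subset[OF bounded_ball]) auto
    define u where "u = (\<lambda>y. k + \<epsilon> * W y)"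
    have u_usc: "usc_on UNIV u" unfolding u_def by (rule usc_affine[OF W_usc eps])
    have subO: "\<Omega> \<subseteq> {x. norm x > R\<^sub>o}" using memO R1 by force
    have Wsub: "visc_sub (bellman a b c) \<Omega> W"
      by (rule sub_restrict[OF W_sub subO usc_mono[OF W_usc]])
    have usub: "visc_sub (bellman a b c) \<Omega> u"
      unfolding u_def
      by (rule sub_affine[OF a_sym F_finite Wsub eps ck usc_mono[OF usc_affine[OF W_usc eps]]])
    have fr: "\<forall>y\<in>frontier \<Omega>. u y \<le> v y"
    proof
      fix y assume y: "y \<in> frontier \<Omega>"
      have c1: "closure \<Omega> \<subseteq> cball 0 R"
        by (rule closure_minimal) (auto simp: \<Omega>_def)
      have c2: "closure \<Omega> \<subseteq> - ball 0 R1"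
        by (rule closure_minimal) (auto simp: \<Omega>_def open_ball closed_Compl)
      have yc: "y \<in> closure \<Omega>" "y \<notin> \<Omega>"
        using y oO unfolding frontier_def by (auto simp: interior_open)
      have ny: "norm y \<le> R" "norm y \<ge> R1" using yc c1 c2 by (auto simp: dist_norm)
      have WY: "W y \<le> -1" using WR1 ny by blast
      show "u y \<le> v y"
      proof (cases "norm y \<le> R1")
        case True
        then have "m \<le> v y" by (rule mK)
        moreover have "\<epsilon> * W y \<le> 0" using eps WY by (intro mult_nonneg_nonpos) auto
        moreover have "k < m" unfolding k_def using eta by simp
        ultimately show ?thesis unfolding u_def by linarith
      next
        case False
        then have "norm y \<ge> R" using yc(2) memO ny by force
        then have bb: "ereal (v y / W y) < ereal (\<epsilon>/2)" "W y \<le> -2*k/\<epsilon>" using b2 R by force+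
        have q: "v y / W y < \<epsilon>/2" using bb(1) by simp
        have Wn: "W y < 0" using WY by simp
        have "\<epsilon>/2 * W y < v y"
        proof -
          have "v y = (v y / W y) * W y" using Wn by simp
          also have "\<dots> > \<epsilon>/2 * W y" by (rule mult_strict_right_mono_neg[OF q Wn])
          finally show ?thesis .
        qed
        moreover have "\<epsilon> * W y \<le> -2*k"
          using bb(2) eps by (simp add: field_simps)
        ultimately show ?thesis unfolding u_def using eps by (simp add: field_simps)
      qed
    qed
    have "\<forall>y\<in>\<Omega>. u y \<le> v y"
      by (rule comparison[OF oO bO usc_mono[OF u_usc] lsc_mono[OF v_lsc] usub super_restrict[OF v_super] fr])
    moreover have "x \<in> \<Omega>" using memO R nx by simp
    ultimately have ux: "k + \<epsilon> * W x \<le> v x" unfolding u_def by simp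
    have "\<epsilon> * \<bar>W x\<bar> \<le> \<eta> / 2" using epsW eps by (simp add: algebra_simps)
    moreover have "- (\<epsilon> * \<bar>W x\<bar>) \<le> \<epsilon> * W x" using eps
      by (metis abs_ge_minus_self abs_mult abs_of_pos minus_le_iff)
    ultimately have "v x \<ge> m - \<eta> - \<eta>/2" using ux unfolding k_def by linarith
    moreover have "v x = m - 2 * \<eta>" unfolding \<eta>_def by (simp add: field_simps)
    ultimately show False using eta by linarith
  qed
  show ?thesis
  proof (cases "\<forall>x. v x \<le> 0")
    case True
    have "\<forall>y. v y = v x0"
      by (rule strong_min[OF v_super]) (use glob True in \<open>auto simp: m_def\<close>)
    then show ?thesis by blast
  next
    case False
    then have c0: "\<And>x \<alpha>. c x \<alpha> = 0" using alt by blast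
    have "\<forall>y. v y - m = v x0 - m"
      by (rule strong_min[OF super_shift[OF v_super c0]]) (use glob in \<open>auto simp: m_def\<close>)
    then show ?thesis by auto
  qed
qed

end
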